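(* Assume the setting of the context (in particular $u=0$ and $p>k$, so $0<\vartheta<\pi$). Let $X_e=\{(\alpha,r)\in\mathbb R\times\mathbb R_+ : r\cos\alpha\le 1 \text{ or } |\alpha|\ge\pi/2\}$ and, with $\tau(\alpha,r)=(\alpha-\vartheta,r)$, let $X_u=\bigcap_{m\in\mathbb Z}\tau^m(X_e)$. Then $Q_u=(\mathbb C\times X_u)\cap\tilde L$, and every point $(z,\alpha,r)\in Q_u$ satisfies $$r\le \frac{1}{\cos\frac{\vartheta}{2}}.$$
   Context: Let $\tilde L=\{(z,\alpha,r)\in\mathbb C\times\mathbb R\times\mathbb R_{>0} : |z|<r\}$, $L=\{(z,w)\in\mathbb C^2: |z|<|w|\}$, and $\pi:\tilde L\to L$, $\pi(z,\alpha,r)=(z,re^{i\alpha})$ (a universal covering). Equip $\mathbb C^2$ with the real symmetric bilinear form $\langle (z_1,w_1),(z_2,w_2)\rangle=\mathrm{Re}(z_1\bar z_2-w_1\bar w_2)$. Let $G=\{(z,w):|z|^2-|w|^2=-1\}\subset L$, identified with $\mathrm{SU}(1,1)$ via $\begin{pmatrix} w&z\\ \bar z&\bar w\end{pmatrix}\mapsto (z,\bar w)$; then left multiplication by $g\leftrightarrow(z_g,\bar w_g)$ extends to the $\mathbb R$-linear isometry $(z,v)\mapsto (w_g z+z_g v,\ \bar z_g z+\bar w_g v)$ of $\mathbb C^2$ preserving $L$. Let $\tilde G=\{(z,\alpha,r)\in\tilde L: |z|^2=r^2-1\}=\pi^{-1}(G)$, the universal cover $\widetilde{\mathrm{SU}}(1,1)$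 with identity $e=(0,0,1)$; the left action of $G$ on $L$ lifts to a left action of $\tilde G$ on $\tilde L$ extending left multiplication on $\tilde G$. Elements of $\tilde G$ act on the unit disk $\mathbb D$ through $\mathrm{PSU}(1,1)$: $(z,\alpha,r)$ with $w=re^{-i\alpha}$ acts by $\zeta\mapsto (w\zeta+z)/(\bar z\zeta+\bar w)$. For $g\in\tilde G$ with $\bar g=\pi(g)$, let $\bar I_{\bar g}=\{a\in L:\langle \bar g,a\rangle\le -1\}$, $\bar E_{\bar g}=\{a\in L:\langle\bar g,a\rangle=-1\}$; let $I_g$, $E_g$ be the connected components of $\pi^{-1}(\bar I_{\bar g})$, $\pi^{-1}(\bar E_{\bar g})$ containing $g$; $E_g$ separates $\tilde L$ into two components, the closure of one being $I_g$; let $H_g$ be the closure of the other (so $\partial H_g=\partial I_g=E_g$). Let $\Gamma\subset\tilde G$ be a discrete subgroup of finite level $k$ (the index of $\Gamma\cap Z$ in the infinite cyclic centre $Z$ of $\tilde G$), let $\bar\Gamma$ be its image in $\mathrm{PSU}(1,1)$, and let $u\in\mathbb D$ be a point fixed by a nontrivial element of $\bar\Gamma$, with isotropy group $\bar\Gamma_u$ of order $p$. Assume $p>k$ and (after conjugation) $u=0$. Put $\vartheta=\pi k/p$; the isotropy group $\Gamma_u$ is infinite cyclic generated by $r_d=(0,-\vartheta,1)$, which acts by $(z,\alpha,r)\mapsto(ze^{i\vartheta},\alpha-\vartheta,r)$. For $x$ in the orbit $\Gamma(u)$ let $T(x)=\{g\in\Gamma: g(u)=x\}$ and $Q_x=\bigcap_{g\in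 T(x)}H_g$; in particular $T(u)=\Gamma_u$ and $Q_u=\bigcap_{m\in\mathbb Z}H_{r_d^m}$. *)

theory Defs
  imports "HOL-Analysis.Analysis"
begin

text \<open>Points of the covering space are triples (z, alpha, r) :: complex \<times> real \<times> real.\<close>

definition Ltil :: "(complex \<times> real \<times> real) set" where
  "Ltil = {(z, a, r). 0 < r \<and> cmod z < r}"

definition Lset :: "(complex \<times> complex) set" where
  "Lset = {(z, w). cmod z < cmod w}"

definition piL :: "complex \<times> real \<times> real \<Rightarrow> complex \<times> complex" where
  "piL x = (case x of (z, a, r) \<Rightarrow> (z, complex_of_real r * cis a))"

definition bform :: "complex \<times> complex \<Rightarrow> complex \<times> complex \<Rightarrow> real" where
  "bform x y = (case x of (z1, w1) \<Rightarrow> case y of (z2, w2) \<Rightarrow> Re (z1 * cnj z2 - w1 * cnj w2))"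

definition Ibar :: "complex \<times> complex \<Rightarrow> (complex \<times> complex) set" where
  "Ibar gb = {a \<in> Lset. bform gb a \<le> -1}"

definition Ebar :: "complex \<times> complex \<Rightarrow> (complex \<times> complex) set" where
  "Ebar gb = {a \<in> Lset. bform gb a = -1}"

definition Iset :: "complex \<times> real \<times> real \<Rightarrow> (complex \<times> real \<times> real) set" where
  "Iset g = connected_component_set (Ltil \<inter> piL -` Ibar (piL g)) g"

definition Eset :: "complex \<times> real \<times> real \<Rightarrow> (complex \<times> real \<times> real) set" where
  "Eset g = connected_component_set (Ltil \<inter> piL -` Ebar (piL g)) g"

definition Hset :: "complex \<times> real \<times> real \<Rightarrow> (complex \<times> real \<times> real) set" where
  "Hset g = \<Union> {Ltil \<inter> closure C | C. C \<in> components (Ltil - Eset g) \<and> Ltil \<inter> closure C \<noteq> Iset g}"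

definition eG :: "complex \<times> real \<times> real" where
  "eG = (0, 0, 1)"

definition rd_pow :: "real \<Rightarrow> int \<Rightarrow> complex \<times> real \<times> real \<Rightarrow> complex \<times> real \<times> real" where
  "rd_pow th m x = (case x of (z, a, r) \<Rightarrow> (z * cis (of_int m * th), a - of_int m * th, r))"

definition Qu :: "real \<Rightarrow> (complex \<times> real \<times> real) set" where
  "Qu th = (\<Inter>m::int. Hset (rd_pow th m eG))"

definition Xe :: "(real \<times> real) set" where
  "Xe = {(a, r). 0 < r \<and> (r * cos a \<le> 1 \<or> \<bar>a\<bar> \<ge> pi / 2)}"

definition tau_pow :: "real \<Rightarrow> int \<Rightarrow> real \<times> real \<Rightarrow> real \<times> real" where
  "tau_pow th m x = (case x of (a, r) \<Rightarrow> (a - of_int m * th, r))"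

definition Xu :: "real \<Rightarrow> (real \<times> real) set" where
  "Xu th = (\<Inter>m::int. tau_pow th m ` Xe)"

end

theory Submission
  imports Defs
begin

lemma ccs_clopen:
  fixes S T U F :: "'a::topological_space set"
  assumes "connected T" "x \<in> T" "T = S \<inter> U" "open U" "T = S \<inter> F" "closed F"
  shows "connected_component_set S x = T"
proof
  show "T \<subseteq> connected_component_set S x"
    using connected_component_maximal assms by blast
  let ?C = "connected_component_set S x"
  have C: "connected ?C" "?C \<subseteq> S" by (simp_all add: connected_component_subset)
  have o: "openin (top_of_set ?C) (?C \<inter> U)" using assms(4) by blast
  have cl: "closedin (top_of_set ?C) (?C \<inter> U)"
  proof -
    have "?C \<inter> U = ?C \<inter> F" using C(2) assms(3,5) by blast
    thus ?thesis using closedin_closed_Int assms(6) by metis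
  qed
  have "x \<in> S" using assms(2,3) by blast
  hence "x \<in> ?C \<inter> U" using assms(2,3) by auto
  hence "?C \<inter> U = ?C" using C(1) o cl unfolding connected_clopen by blast
  thus "?C \<subseteq> T" using C(2) assms(3) by blast
qed

definition lft :: "(real \<times> real) set \<Rightarrow> (complex \<times> real \<times> real) set" where
  "lft P = {(z,a,r). (a,r) \<in> P \<and> cmod z < r}"

lemma lft_image:
  assumes "P \<subseteq> {(a,r). 0 < r}"
  shows "lft P = (\<lambda>x. (fst x * of_real (snd (snd x)), fst (snd x), snd (snd x))) ` (ball (0::complex) 1 \<times> P)"
proof
  show "lft P \<subseteq> (\<lambda>x. (fst x * of_real (snd (snd x)), fst (snd x), snd (snd x))) ` (ball (0::complex) 1 \<times> P)"
  proof
    fix y assume "y \<in> lft P"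
    then obtain z a r where y: "y = (z,a,r)" "(a,r) \<in> P" "cmod z < r" unfolding lft_def by auto
    have r: "r > 0" using y(3) norm_ge_zero[of z] by linarith
    have "cmod (z / of_real r) < 1" using y(3) r by (simp add: norm_divide)
    moreover have "y = (\<lambda>x. (fst x * of_real (snd (snd x)), fst (snd x), snd (snd x))) (z / of_real r, a, r)"
      using y r by simp
    ultimately show "y \<in> (\<lambda>x. (fst x * of_real (snd (snd x)), fst (snd x), snd (snd x))) ` (ball (0::complex) 1 \<times> P)"
      using y(2) by (intro image_eqI) auto
  qed
next
  show "(\<lambda>x. (fst x * of_real (snd (snd x)), fst (snd x), snd (snd x))) ` (ball (0::complex) 1 \<times> P) \<subseteq> lft P"
  proof
    fix y assume "y \<in> (\<lambda>x. (fst x * of_real (snd (snd x)), fst (snd x), snd (snd x))) ` (ball (0::complex) 1 \<times> P)"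
    then obtain w :: complex and a r where y: "y = (w * of_real r, a, r)" "cmod w < 1" "(a,r) \<in> P"
      by (auto simp del: mult_cancel_right) blast
    have "r > 0" using assms y(3) by auto
    thus "y \<in> lft P" using y unfolding lft_def by (auto simp: norm_mult)
  qed
qed

lemma connected_lft:
  assumes "connected P" "P \<subseteq> {(a,r). 0 < r}"
  shows "connected (lft P)"
  unfolding lft_image[OF assms(2)]
  by (intro connected_continuous_image connected_Times assms(1) convex_connected convex_ball
      continuous_intros)

definition inI :: "real \<Rightarrow> bool" where
  "inI b \<longleftrightarrow> -(pi/2) < b \<and> b < pi/2"

definition EP :: "real \<Rightarrow> (real \<times> real) set" where
  "EP c = {(a,r). inI (a+c) \<and> r * cos (a+c) = 1}"
definition IP :: "real \<Rightarrow> (real \<times> real) set" where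
  "IP c = {(a,r). inI (a+c) \<and> r * cos (a+c) \<ge> 1}"
definition AP :: "real \<Rightarrow> (real \<times> real) set" where
  "AP c = {(a,r). inI (a+c) \<and> r * cos (a+c) > 1}"
definition BP :: "real \<Rightarrow> (real \<times> real) set" where
  "BP c = {(a,r). 0 < r \<and> (\<not> inI (a+c) \<or> r * cos (a+c) < 1)}"
definition HP :: "real \<Rightarrow> (real \<times> real) set" where
  "HP c = {(a,r). 0 < r \<and> (\<not> inI (a+c) \<or> r * cos (a+c) \<le> 1)}"

lemma cos_pos_inI: "inI b \<Longrightarrow> cos b > 0"
  unfolding inI_def by (rule cos_gt_zero_pi) auto

lemma inI_Ioo: "inI b \<longleftrightarrow> b \<in> {-(pi/2)<..<pi/2}"
  unfolding inI_def by simp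

lemma pos_r_lemma:
  assumes "inI b" "r * cos b \<ge> 1" shows "r > 0"
proof -
  have "cos b > 0" using cos_pos_inI assms(1) by blast
  moreover have "r * cos b > 0" using assms(2) by linarith
  ultimately show ?thesis by (simp add: zero_less_mult_iff)
qed

lemma EP_pos: "EP c \<subseteq> {(a,r). 0 < r}"
  unfolding EP_def using pos_r_lemma by fastforce
lemma IP_pos: "IP c \<subseteq> {(a,r). 0 < r}"
  unfolding IP_def using pos_r_lemma by fastforce
lemma AP_pos: "AP c \<subseteq> {(a,r). 0 < r}"
  unfolding AP_def using pos_r_lemma by (fastforce dest: less_imp_le)
lemma BP_pos: "BP c \<subseteq> {(a,r). 0 < r}"
  unfolding BP_def by auto
lemma HP_pos: "HP c \<subseteq> {(a,r). 0 < r}"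
  unfolding HP_def by auto

lemma cont_sec: "continuous_on {-(pi/2)<..<pi/2} (\<lambda>b. 1 / cos b)"
proof (intro continuous_intros ballI)
  fix b :: real assume "b \<in> {-(pi/2)<..<pi/2}"
  thus "cos b \<noteq> 0" using cos_pos_inI[of b] unfolding inI_Ioo by simp
qed

lemma connected_EP: "connected (EP c)"
proof -
  have eq: "EP c = (\<lambda>b. (b - c, 1 / cos b)) ` {-(pi/2)<..<pi/2}"
  proof
    show "EP c \<subseteq> (\<lambda>b. (b - c, 1 / cos b)) ` {-(pi/2)<..<pi/2}"
    proof
      fix x assume "x \<in> EP c"
      then obtain a r where x: "x = (a,r)" "inI (a+c)" "r * cos (a+c) = 1"
        unfolding EP_def by auto
      have "cos (a+c) > 0" using cos_pos_inI x(2) by blast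
      hence "r = 1 / cos (a+c)" using x(3) by (simp add: field_simps)
      moreover have "a+c \<in> {-(pi/2)<..<pi/2}" using x(2) unfolding inI_Ioo .
      ultimately show "x \<in> (\<lambda>b. (b - c, 1 / cos b)) ` {-(pi/2)<..<pi/2}"
        using x(1) by (intro image_eqI[of _ _ "a+c"]) simp_all
    qed
  next
    show "(\<lambda>b. (b - c, 1 / cos b)) ` {-(pi/2)<..<pi/2} \<subseteq> EP c"
    proof
      fix y assume "y \<in> (\<lambda>b. (b - c, 1 / cos b)) ` {-(pi/2)<..<pi/2}"
      then obtain b where b: "b \<in> {-(pi/2)<..<pi/2}" "y = (b - c, 1 / cos b)" by blast
      hence "inI b" by (simp add: inI_Ioo)
      moreover hence "cos b > 0" using cos_pos_inI by blast
      ultimately show "y \<in> EP c" using b(2) unfolding EP_def by simp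
    qed
  qed
  have cont: "continuous_on {-(pi/2)<..<pi/2} (\<lambda>b. (b - c, 1 / cos b))"
    by (intro continuous_on_Pair continuous_intros cont_sec)
  show ?thesis
    unfolding eq by (rule connected_continuous_image[OF cont connected_Ioo])
qed

lemma connected_IP_AP_aux:
  assumes "T = {0..} \<or> T = {0<..}"
    and "P = {(a,r). inI (a+c) \<and> (r - 1 / cos (a+c)) \<in> T}"
  shows "connected P"
proof -
  have eq: "P = (\<lambda>x. (fst x - c, 1 / cos (fst x) + snd x)) ` ({-(pi/2)<..<pi/2} \<times> T)"
  proof
    show "P \<subseteq> (\<lambda>x. (fst x - c, 1 / cos (fst x) + snd x)) ` ({-(pi/2)<..<pi/2} \<times> T)"
    proof
      fix x assume "x \<in> P"
      then obtain a r where x: "x = (a,r)" "inI (a+c)" "r - 1 / cos (a+c) \<in> T"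
        unfolding assms(2) by auto
      moreover have "a+c \<in> {-(pi/2)<..<pi/2}" using x(2) unfolding inI_Ioo .
      ultimately show "x \<in> (\<lambda>x. (fst x - c, 1 / cos (fst x) + snd x)) ` ({-(pi/2)<..<pi/2} \<times> T)"
        by (intro image_eqI[of _ _ "(a+c, r - 1 / cos (a+c))"]) simp_all
    qed
  next
    show "(\<lambda>x. (fst x - c, 1 / cos (fst x) + snd x)) ` ({-(pi/2)<..<pi/2} \<times> T) \<subseteq> P"
      unfolding assms(2) inI_Ioo by auto
  qed
  have cont: "continuous_on ({-(pi/2)<..<pi/2} \<times> T) (\<lambda>x. (fst x - c, 1 / cos (fst x) + snd x))"
    by (intro continuous_on_Pair continuous_intros
        continuous_on_compose2[OF cont_sec continuous_on_fst]) auto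
  have conn: "connected ({-(pi/2)<..<pi/2} \<times> T)"
    using assms(1) by (auto intro!: connected_Times)
  show ?thesis
    unfolding eq by (rule connected_continuous_image[OF cont conn])
qed

lemma IP_alt: "IP c = {(a,r). inI (a+c) \<and> (r - 1 / cos (a+c)) \<in> {0..}}"
proof -
  have "r * cos b \<ge> 1 \<longleftrightarrow> r - 1 / cos b \<in> {0..}" if "inI b" for r b
  proof -
    have "cos b > 0" using cos_pos_inI that by blast
    thus ?thesis by (simp add: pos_divide_le_eq)
  qed
  thus ?thesis unfolding IP_def by blast
qed

lemma AP_alt: "AP c = {(a,r). inI (a+c) \<and> (r - 1 / cos (a+c)) \<in> {0<..}}"
proof -
  have "r * cos b > 1 \<longleftrightarrow> r - 1 / cos b \<in> {0<..}" if "inI b" for r b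
  proof -
    have "cos b > 0" using cos_pos_inI that by blast
    thus ?thesis by (simp add: pos_divide_less_eq)
  qed
  thus ?thesis unfolding AP_def by blast
qed

lemma connected_IP: "connected (IP c)"
  by (rule connected_IP_AP_aux[OF _ IP_alt]) simp
lemma connected_AP: "connected (AP c)"
  by (rule connected_IP_AP_aux[OF _ AP_alt]) simp

lemma connected_BP: "connected (BP c)"
proof -
  define S1 :: "(real \<times> real) set" where "S1 = UNIV \<times> {0<..<1}"
  define sg where "sg p = (\<lambda>s. (fst p, s)) ` {0<..snd p}" for p :: "real \<times> real"
  have S1B: "S1 \<subseteq> BP c"
  proof
    fix p assume "p \<in> S1"
    then obtain a r where p: "p = (a,r)" "0 < r" "r < 1" unfolding S1_def by auto
    have "r * cos (a+c) \<le> r * 1" using p(2) cos_le_one by (intro mult_left_mono) auto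
    hence "r * cos (a+c) < 1" using p(3) by linarith
    thus "p \<in> BP c" using p unfolding BP_def by auto
  qed
  have sgB: "sg p \<subseteq> BP c" if "p \<in> BP c" for p
  proof
    fix q assume "q \<in> sg p"
    then obtain s where q: "q = (fst p, s)" "0 < s" "s \<le> snd p" unfolding sg_def by auto
    obtain a r where p: "p = (a,r)" by fastforce
    show "q \<in> BP c"
    proof (cases "inI (a+c)")
      case True
      hence "cos (a+c) > 0" using cos_pos_inI by blast
      hence "s * cos (a+c) \<le> r * cos (a+c)" using q p by (intro mult_right_mono) auto
      moreover have "r * cos (a+c) < 1" using that p True unfolding BP_def by auto
      ultimately show ?thesis using q p unfolding BP_def by auto
    next
      case False
      thus ?thesis using q p unfolding BP_def by auto
    qed
  qed
  have eq: "BP c = (\<Union>p\<in>BP c. S1 \<union> sg p)"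
  proof
    show "BP c \<subseteq> (\<Union>p\<in>BP c. S1 \<union> sg p)"
    proof
      fix p assume p: "p \<in> BP c"
      hence "snd p > 0" unfolding BP_def by auto
      hence "p \<in> sg p" unfolding sg_def by (intro image_eqI[of _ _ "snd p"]) auto
      thus "p \<in> (\<Union>p\<in>BP c. S1 \<union> sg p)" using p by blast
    qed
  qed (use S1B sgB in blast)
  have "connected (\<Union>((\<lambda>p. S1 \<union> sg p) ` BP c))"
  proof (rule connected_Union)
    fix X assume "X \<in> (\<lambda>p. S1 \<union> sg p) ` BP c"
    then obtain p where p: "p \<in> BP c" "X = S1 \<union> sg p" by blast
    have "connected S1" unfolding S1_def by (intro connected_Times) auto
    moreover have "connected (sg p)" unfolding sg_def
      by (intro connected_continuous_image continuous_intros) auto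
    moreover have "(fst p, min (snd p) (1/2)) \<in> S1 \<inter> sg p"
    proof -
      have "snd p > 0" using p unfolding BP_def by auto
      thus ?thesis unfolding S1_def sg_def by auto
    qed
    ultimately show "connected X" using p(2) by (metis connected_Un empty_iff)
  next
    have "(0, 1/2) \<in> \<Inter>((\<lambda>p. S1 \<union> sg p) ` BP c)" unfolding S1_def by auto
    thus "\<Inter>((\<lambda>p. S1 \<union> sg p) ` BP c) \<noteq> {}" by blast
  qed
  thus ?thesis using eq by simp
qed

lemma triple_set_eqI:
  fixes A B :: "(complex \<times> real \<times> real) set"
  assumes "\<And>z a r. (z,a,r) \<in> A \<longleftrightarrow> (z,a,r) \<in> B"
  shows "A = B"
  using assms by (intro set_eqI) (metis prod_cases3)

lemma mem_lft [simp]: "(z,a,r) \<in> lft P \<longleftrightarrow> (a,r) \<in> P \<and> cmod z < r"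
  unfolding lft_def by simp

lemma mem_Ltil [simp]: "(z,a,r) \<in> Ltil \<longleftrightarrow> cmod z < r"
proof -
  have "cmod z < r \<Longrightarrow> 0 < r" using norm_ge_zero[of z] by linarith
  thus ?thesis unfolding Ltil_def by auto
qed

lemma bform_g: "bform (piL (0,-c,1)) (piL (z,a,r)) = - (r * cos (a+c))"
proof -
  have "bform (piL (0,-c,1)) (piL (z,a,r)) = Re (- (cis (-c) * cnj (complex_of_real r * cis a)))"
    unfolding bform_def piL_def by simp
  also have "cis (-c) * cnj (complex_of_real r * cis a) = complex_of_real r * cis (-c-a)"
    by (simp add: cis_cnj cis_mult)
  also have "Re (- (complex_of_real r * cis (-c-a))) = - (r * cos (a+c))"
  proof -
    have "cos (-c-a) = cos (a+c)" by (metis cos_minus minus_diff_eq diff_minus_eq_add add.commute)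
    thus ?thesis by simp
  qed
  finally show ?thesis .
qed

lemma Lset_piL: "0 < r \<Longrightarrow> piL (z,a,r) \<in> Lset \<longleftrightarrow> cmod z < r"
  unfolding Lset_def piL_def by (simp add: norm_mult)

lemma mem_PE: "cmod z < r \<Longrightarrow> piL (z,a,r) \<in> Ebar (piL (0,-c,1)) \<longleftrightarrow> r * cos (a+c) = 1"
proof -
  have "Ebar (piL (0,-c,1)) = {x \<in> Lset. bform (piL (0,-c,1)) x = -1}" unfolding Ebar_def ..
  moreover assume "cmod z < r"
  moreover hence "0 < r" using norm_ge_zero[of z] by linarith
  ultimately show ?thesis using Lset_piL bform_g by auto
qed

lemma mem_PI: "cmod z < r \<Longrightarrow> piL (z,a,r) \<in> Ibar (piL (0,-c,1)) \<longleftrightarrow> r * cos (a+c) \<ge> 1"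
proof -
  have "Ibar (piL (0,-c,1)) = {x \<in> Lset. bform (piL (0,-c,1)) x \<le> -1}" unfolding Ibar_def ..
  moreover assume "cmod z < r"
  moreover hence "0 < r" using norm_ge_zero[of z] by linarith
  ultimately show ?thesis using Lset_piL bform_g by auto
qed

definition inIc :: "real \<Rightarrow> bool" where
  "inIc b \<longleftrightarrow> -(pi/2) \<le> b \<and> b \<le> pi/2"

lemma bnd_cos: "\<not> inI b \<Longrightarrow> inIc b \<Longrightarrow> cos b = 0"
proof -
  assume "\<not> inI b" "inIc b"
  hence "b = pi/2 \<or> b = -(pi/2)" unfolding inI_def inIc_def by linarith
  thus "cos b = 0"
  proof
    assume h: "b = pi/2" show ?thesis unfolding h by simp
  next
    assume h: "b = -(pi/2)" show ?thesis unfolding h by simp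
  qed
qed

lemma inI_le: "inI b \<Longrightarrow> inIc b"
  unfolding inI_def inIc_def by linarith

lemma inIc_inI: "inIc b \<Longrightarrow> r * cos b \<ge> 1 \<Longrightarrow> inI b"
  using bnd_cos[of b] by (cases "inI b") auto

lemma inIc_inI_eq: "inIc b \<Longrightarrow> r * cos b = 1 \<Longrightarrow> inI b"
  using inIc_inI[of b r] by simp

definition Uo :: "real \<Rightarrow> (complex \<times> real \<times> real) set" where
  "Uo c = {x. -(pi/2) < fst (snd x) + c} \<inter> {x. fst (snd x) + c < pi/2}"
definition Fc :: "real \<Rightarrow> (complex \<times> real \<times> real) set" where
  "Fc c = {x. -(pi/2) \<le> fst (snd x) + c} \<inter> {x. fst (snd x) + c \<le> pi/2}"

lemma open_Uo: "open (Uo c)"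
  unfolding Uo_def by (intro open_Int open_Collect_less continuous_intros)
lemma closed_Fc: "closed (Fc c)"
  unfolding Fc_def by (intro closed_Int closed_Collect_le continuous_intros)
lemma mem_Uo [simp]: "(z,a,r) \<in> Uo c \<longleftrightarrow> inI (a+c)"
  unfolding Uo_def inI_def by simp
lemma mem_Fc [simp]: "(z,a,r) \<in> Fc c \<longleftrightarrow> inIc (a+c)"
  unfolding Fc_def inIc_def by simp

lemma g_in: "(0, -c, 1) \<in> lft (EP c)" "(0, -c, 1) \<in> lft (IP c)"
  unfolding EP_def IP_def inI_def by auto

lemma Eset_g: "Eset (0,-c,1) = lft (EP c)"
  unfolding Eset_def
proof (rule ccs_clopen[OF connected_lft[OF connected_EP EP_pos] g_in(1) _ open_Uo _ closed_Fc])
  show "lft (EP c) = Ltil \<inter> piL -` Ebar (piL (0, - c, 1)) \<inter> Uo c"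
    by (rule triple_set_eqI) (auto simp: mem_PE EP_def)
  show "lft (EP c) = Ltil \<inter> piL -` Ebar (piL (0, - c, 1)) \<inter> Fc c"
    by (rule triple_set_eqI) (auto simp: mem_PE EP_def dest: inI_le intro: inIc_inI_eq)
qed

lemma Iset_g: "Iset (0,-c,1) = lft (IP c)"
  unfolding Iset_def
proof (rule ccs_clopen[OF connected_lft[OF connected_IP IP_pos] g_in(2) _ open_Uo _ closed_Fc])
  show "lft (IP c) = Ltil \<inter> piL -` Ibar (piL (0, - c, 1)) \<inter> Uo c"
    by (rule triple_set_eqI) (auto simp: mem_PI IP_def)
  show "lft (IP c) = Ltil \<inter> piL -` Ibar (piL (0, - c, 1)) \<inter> Fc c"
    by (rule triple_set_eqI) (auto simp: mem_PI IP_def dest: inI_le intro: inIc_inI)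
qed

definition UA :: "real \<Rightarrow> (complex \<times> real \<times> real) set" where
  "UA c = Uo c \<inter> {x. 1 < snd (snd x) * cos (fst (snd x) + c)}"
definition FA :: "real \<Rightarrow> (complex \<times> real \<times> real) set" where
  "FA c = Fc c \<inter> {x. 1 \<le> snd (snd x) * cos (fst (snd x) + c)}"
definition FH :: "real \<Rightarrow> (complex \<times> real \<times> real) set" where
  "FH c = - Uo c \<union> {x. snd (snd x) * cos (fst (snd x) + c) \<le> 1}"

lemma open_UA: "open (UA c)"
  unfolding UA_def by (intro open_Int open_Uo open_Collect_less continuous_intros)
lemma closed_FA: "closed (FA c)"
  unfolding FA_def by (intro closed_Int closed_Fc closed_Collect_le continuous_intros)
lemma closed_FH: "closed (FH c)"
  unfolding FH_def by (intro closed_Un closed_Compl open_Uo closed_Collect_le continuous_intros)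
lemma mem_UA [simp]: "(z,a,r) \<in> UA c \<longleftrightarrow> inI (a+c) \<and> 1 < r * cos (a+c)"
  unfolding UA_def by simp
lemma mem_FA [simp]: "(z,a,r) \<in> FA c \<longleftrightarrow> inIc (a+c) \<and> 1 \<le> r * cos (a+c)"
  unfolding FA_def by simp
lemma mem_FH [simp]: "(z,a,r) \<in> FH c \<longleftrightarrow> \<not> inI (a+c) \<or> r * cos (a+c) \<le> 1"
  unfolding FH_def by simp

lemma lft_pos: "(z,a,r) \<in> lft P \<Longrightarrow> 0 < r"
  using norm_ge_zero[of z] by (simp only: mem_lft) linarith

lemma comp_A:
  assumes "x \<in> lft (AP c)"
  shows "connected_component_set (Ltil - lft (EP c)) x = lft (AP c)"
proof (rule ccs_clopen[OF connected_lft[OF connected_AP AP_pos] assms _ open_UA _ closed_FA])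
  show "lft (AP c) = (Ltil - lft (EP c)) \<inter> UA c"
    by (rule triple_set_eqI) (auto simp: AP_def EP_def)
  show "lft (AP c) = (Ltil - lft (EP c)) \<inter> FA c"
    by (rule triple_set_eqI) (auto simp: AP_def EP_def dest: inI_le intro: inIc_inI)
qed

lemma comp_B:
  assumes "x \<in> lft (BP c)"
  shows "connected_component_set (Ltil - lft (EP c)) x = lft (BP c)"
proof (rule ccs_clopen[OF connected_lft[OF connected_BP BP_pos] assms _ _ _ closed_Compl[OF open_UA]])
  show "open (- FA c)" using closed_FA by (simp add: open_Compl)
  show "lft (BP c) = (Ltil - lft (EP c)) \<inter> - FA c"
    by (rule triple_set_eqI) (auto simp: BP_def EP_def dest: inI_le intro: inIc_inI lft_pos)
  show "lft (BP c) = (Ltil - lft (EP c)) \<inter> - UA c"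
    by (rule triple_set_eqI) (auto simp: BP_def EP_def intro: lft_pos)
qed

lemma S2_split: "Ltil - lft (EP c) = lft (AP c) \<union> lft (BP c)"
  by (rule triple_set_eqI) (auto simp: AP_def BP_def EP_def intro: lft_pos)

lemma A_ne: "(0, -c, 2) \<in> lft (AP c)"
  unfolding AP_def inI_def by simp

lemma B_ne: "(0, pi-c, 1) \<in> lft (BP c)"
  unfolding BP_def inI_def by simp

lemma components_S2: "components (Ltil - lft (EP c)) = {lft (AP c), lft (BP c)}"
proof
  show "components (Ltil - lft (EP c)) \<subseteq> {lft (AP c), lft (BP c)}"
  proof
    fix C assume "C \<in> components (Ltil - lft (EP c))"
    then obtain x where x: "x \<in> Ltil - lft (EP c)" "C = connected_component_set (Ltil - lft (EP c)) x"
      unfolding components_iff by blast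
    hence "x \<in> lft (AP c) \<or> x \<in> lft (BP c)" using S2_split by blast
    thus "C \<in> {lft (AP c), lft (BP c)}" using x(2) comp_A comp_B by blast
  qed
  show "{lft (AP c), lft (BP c)} \<subseteq> components (Ltil - lft (EP c))"
  proof -
    have "lft (AP c) \<in> components (Ltil - lft (EP c))"
      unfolding components_iff using A_ne[of c] comp_A[OF A_ne] S2_split by blast
    moreover have "lft (BP c) \<in> components (Ltil - lft (EP c))"
      unfolding components_iff using B_ne[of c] comp_B[OF B_ne] S2_split by blast
    ultimately show ?thesis by blast
  qed
qed

lemma dist_tr: "dist (z::complex, a::real, r::real) (z, a, s) = dist r s"
  by (simp add: dist_Pair_Pair)

lemma clA: "Ltil \<inter> closure (lft (AP c)) = lft (IP c)"
proof
  have "closure (lft (AP c)) \<subseteq> FA c"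
    by (rule closure_minimal[OF _ closed_FA], rule subsetI, case_tac x)
       (auto simp: AP_def dest: inI_le)
  moreover have "Ltil \<inter> FA c \<subseteq> lft (IP c)"
    by (rule subsetI, case_tac x) (auto simp: IP_def intro: inIc_inI)
  ultimately show "Ltil \<inter> closure (lft (AP c)) \<subseteq> lft (IP c)" by blast
next
  show "lft (IP c) \<subseteq> Ltil \<inter> closure (lft (AP c))"
  proof
    fix x assume "x \<in> lft (IP c)"
    then obtain z a r where x: "x = (z,a,r)" "inI (a+c)" "1 \<le> r * cos (a+c)" "cmod z < r"
      unfolding IP_def by (cases x) auto
    have cpos: "cos (a+c) > 0" using cos_pos_inI x(2) by blast
    have "x \<in> closure (lft (AP c))"
      unfolding closure_approachable
    proof (intro allI impI)
      fix e :: real assume e: "e > 0"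
      have "(r + e/2) * cos (a+c) = r * cos (a+c) + (e/2) * cos (a+c)" by (simp add: algebra_simps)
      moreover have "(e/2) * cos (a+c) > 0" using e cpos by simp
      ultimately have "(r + e/2) * cos (a+c) > 1" using x(3) by linarith
      moreover have "cmod z < r + e/2" using x(4) e by linarith
      ultimately have "(z, a, r + e/2) \<in> lft (AP c)" using x(2) unfolding AP_def by simp
      moreover have "dist (z, a, r + e/2) x < e" using e x(1) by (simp add: dist_tr dist_real_def)
      ultimately show "\<exists>y\<in>lft (AP c). dist y x < e" by blast
    qed
    moreover have "x \<in> Ltil" using x by simp
    ultimately show "x \<in> Ltil \<inter> closure (lft (AP c))" by blast
  qed
qed

lemma clB: "Ltil \<inter> closure (lft (BP c)) = lft (HP c)"
proof
  have "closure (lft (BP c)) \<subseteq> FH c"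
    by (rule closure_minimal[OF _ closed_FH], rule subsetI, case_tac x)
       (auto simp: BP_def)
  moreover have "Ltil \<inter> FH c \<subseteq> lft (HP c)"
    by (rule subsetI, case_tac x) (auto simp: HP_def intro: lft_pos)
  ultimately show "Ltil \<inter> closure (lft (BP c)) \<subseteq> lft (HP c)" by blast
next
  show "lft (HP c) \<subseteq> Ltil \<inter> closure (lft (BP c))"
  proof
    fix x assume xH: "x \<in> lft (HP c)"
    then obtain z a r where x: "x = (z,a,r)" "0 < r" "\<not> inI (a+c) \<or> r * cos (a+c) \<le> 1" "cmod z < r"
      unfolding HP_def by (cases x) auto
    have "x \<in> closure (lft (BP c))"
    proof (cases "x \<in> lft (BP c)")
      case True
      thus ?thesis using closure_subset by blast
    next
      case False
      hence I: "inI (a+c)" and eq1: "r * cos (a+c) = 1" using x unfolding BP_def by auto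
      have cpos: "cos (a+c) > 0" using cos_pos_inI I by blast
      show ?thesis
        unfolding closure_approachable
      proof (intro allI impI)
        fix e :: real assume e: "e > 0"
        define d where "d = min (e/2) ((r - cmod z)/2)"
        have d: "0 < d" "d < e" "d < r - cmod z" using e x(4) unfolding d_def min_def by auto
        have "(r - d) * cos (a+c) = r * cos (a+c) - d * cos (a+c)" by (simp add: algebra_simps)
        moreover have "d * cos (a+c) > 0" using d cpos by simp
        ultimately have "(r - d) * cos (a+c) < 1" using eq1 by linarith
        moreover have "cmod z < r - d" "0 < r - d" using d norm_ge_zero[of z] by linarith+
        ultimately have "(z, a, r - d) \<in> lft (BP c)" unfolding BP_def by simp
        moreover have "dist (z, a, r - d) x < e" using d x(1) by (simp add: dist_tr dist_real_def)
        ultimately show "\<exists>y\<in>lft (BP c). dist y x < e" by blast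
      qed
    qed
    moreover have "x \<in> Ltil" using x by simp
    ultimately show "x \<in> Ltil \<inter> closure (lft (BP c))" by blast
  qed
qed

lemma HP_ne_IP: "lft (HP c) \<noteq> lft (IP c)"
proof -
  have "(0, pi - c, 1) \<in> lft (HP c)" unfolding HP_def inI_def by simp
  moreover have "(0, pi - c, 1) \<notin> lft (IP c)" unfolding IP_def inI_def by simp
  ultimately show ?thesis by blast
qed

lemma Hset_g: "Hset (0,-c,1) = lft (HP c)"
proof -
  have "{Ltil \<inter> closure C | C. C \<in> components (Ltil - Eset (0,-c,1)) \<and> Ltil \<inter> closure C \<noteq> Iset (0,-c,1)}
        = {lft (HP c)}"
    unfolding Eset_g Iset_g components_S2 using clA[of c] clB[of c] HP_ne_IP[of c]
    by (auto intro!: exI[of _ "lft (BP c)"])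
  thus ?thesis unfolding Hset_def by simp
qed

lemma rd_pow_eG: "rd_pow th m eG = (0, - (of_int m * th), 1)"
  unfolding rd_pow_def eG_def by simp

lemma Qu_eq: "Qu th = (\<Inter>m::int. lft (HP (of_int m * th)))"
  unfolding Qu_def rd_pow_eG Hset_g ..

lemma tau_mem: "(a,r) \<in> tau_pow th m ` Xe \<longleftrightarrow> (a + of_int m * th, r) \<in> Xe"
proof
  assume "(a,r) \<in> tau_pow th m ` Xe"
  then obtain a' r' where "(a',r') \<in> Xe" "(a,r) = tau_pow th m (a',r')" by auto
  hence "(a',r') \<in> Xe" "a = a' - of_int m * th" "r = r'" unfolding tau_pow_def by auto
  thus "(a + of_int m * th, r) \<in> Xe" by simp
next
  assume "(a + of_int m * th, r) \<in> Xe"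
  moreover have "(a,r) = tau_pow th m (a + of_int m * th, r)" unfolding tau_pow_def by simp
  ultimately show "(a,r) \<in> tau_pow th m ` Xe" by blast
qed

lemma not_inI_abs: "\<not> inI b \<longleftrightarrow> pi/2 \<le> \<bar>b\<bar>"
  unfolding inI_def by (cases "b \<ge> 0") (simp_all add: not_less, linarith+)

lemma HP_Xe: "(a,r) \<in> HP c \<longleftrightarrow> (a + c, r) \<in> Xe"
  unfolding HP_def Xe_def not_inI_abs by auto

lemma mem_Xu: "(a,r) \<in> Xu th \<longleftrightarrow> (\<forall>m::int. (a + of_int m * th, r) \<in> Xe)"
  unfolding Xu_def using tau_mem by blast

theorem mainTheorem1:
  fixes k p :: nat and th :: real
  assumes "0 < k" and "k < p"
    and "th = pi * real k / real p"
  shows "Qu th = (UNIV \<times> Xu th) \<inter> Ltil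
    \<and> (\<forall>z a r. (z, a, r) \<in> Qu th \<longrightarrow> r \<le> 1 / cos (th / 2))"
proof
  show Q: "Qu th = (UNIV \<times> Xu th) \<inter> Ltil"
  proof (rule triple_set_eqI)
    fix z a r
    show "(z, a, r) \<in> Qu th \<longleftrightarrow> (z, a, r) \<in> (UNIV \<times> Xu th) \<inter> Ltil"
      unfolding Qu_eq by (simp add: mem_Xu HP_Xe)
  qed
  have thpos: "0 < th" using assms by simp
  have thlt: "th < pi"
  proof -
    have "real k / real p < 1" using assms(1,2) by simp
    hence "pi * (real k / real p) < pi * 1" by (intro mult_strict_left_mono) auto
    thus ?thesis using assms(3) by simp
  qed
  show "\<forall>z a r. (z, a, r) \<in> Qu th \<longrightarrow> r \<le> 1 / cos (th / 2)"
  proof (intro allI impI)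
    fix z a r assume "(z, a, r) \<in> Qu th"
    hence H: "\<And>m::int. (a + of_int m * th, r) \<in> Xe" "cmod z < r"
      unfolding Q by (auto simp: mem_Xu)
    have rpos: "0 < r" using H(2) norm_ge_zero[of z] by linarith
    define m where "m = \<lfloor>(th/2 - a) / th\<rfloor>"
    have f: "of_int m \<le> (th/2 - a) / th" "(th/2 - a) / th < of_int m + 1"
      unfolding m_def by linarith+
    have f1: "of_int m * th \<le> th/2 - a" using f(1) thpos by (simp add: pos_le_divide_eq)
    have f2: "th/2 - a < (of_int m + 1) * th" using f(2) thpos by (simp add: pos_divide_less_eq)
    define b where "b = a + of_int m * th"
    have "(of_int m + 1) * th = of_int m * th + th" by (simp add: algebra_simps)
    hence "-(th/2) < b" "b \<le> th/2" using f1 f2 unfolding b_def by linarith+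
    hence bb: "\<bar>b\<bar> \<le> th/2" by linarith
    have "\<not> pi/2 \<le> \<bar>b\<bar>" using bb thlt by linarith
    hence rc: "r * cos b \<le> 1" using H(1)[of m] unfolding b_def Xe_def by auto
    have "cos (th/2) \<le> cos \<bar>b\<bar>"
      using bb thlt thpos by (subst cos_mono_le_eq) auto
    hence "cos (th/2) \<le> cos b" by (cases "b \<ge> 0") auto
    hence "r * cos (th/2) \<le> r * cos b" using rpos by (intro mult_left_mono) auto
    hence "r * cos (th/2) \<le> 1" using rc by linarith
    moreover have "cos (th/2) > 0" using thpos thlt by (intro cos_gt_zero_pi) auto
    ultimately show "r \<le> 1 / cos (th / 2)" by (simp add: pos_le_divide_eq)
  qed
qed

end
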